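(* The wreath product $\mathbb{Z}_2 \wr \mathbb{Z}^2$ is Cayley $2$-tape linear-time computable.
   Context: For $k>1$, a $k$-tape Turing machine has $k$ semi-infinite tapes, each with the unmodifiable symbol $\boxplus$ in its leftmost cell (occurring only there); $\boxdot$ is the blank symbol. A function $f : \Sigma^* \to \Sigma^*$ is computed on a $k$-tape Turing machine in linear time if there is such a machine and a constant $C>0$ such that for every input $x \in \Sigma^*$ of length $n$, started with first tape $\boxplus x \boxdot^\infty$, the other tapes $\boxplus \boxdot^\infty$, all heads on $\boxplus$, the machine halts in an accepting state in at most $Cn$ steps with the first tape having prefix $\boxplus f(x) \boxdot$ (no restriction on anything else). A finitely generated group $G$ with finite set of semigroup generators $S$ is Cayley $k$-tape linear-time computable if there exist a finite alphabet $\Sigma$, a language $L \subseteq \Sigma^*$, a bijection $\psi : L \to G$ and, for each $s \in S$, a function $f_s : \Sigma^* \to \Sigma^*$ computed on a $k$-tape Turing machine in linear time such that $\psi(f_s(w)) = \psi(w)s$ for all $w \in L$ (this does not depend on the choice of $S$). $\mathbb{Z}_2 \wr \mathbb{Z}^2$ is the restricted wreath product (lamplighter group over $\mathbb{Z}^2$). *)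

theory Defs
  imports Main "HOL-Algebra.Group"
begin

text \<open>Tape symbols: the left-end marker (boxplus), the blank (boxdot), and
  ordinary symbols coded by natural numbers (input letters and work symbols).\<close>
datatype tsym = LMark | Blank | Sym nat

datatype dir = Lft | Stay | Rgt

record tm =
  tm_tapes  :: nat
  tm_states :: "nat set"
  tm_gamma  :: "nat set"
  tm_start  :: nat
  tm_final  :: "nat set"
  tm_accept :: "nat set"
  tm_delta  :: "nat \<Rightarrow> tsym list \<Rightarrow> nat \<times> tsym list \<times> dir list"

type_synonym config = "nat \<times> (nat \<Rightarrow> tsym) list \<times> nat list"

definition tape_syms :: "tm \<Rightarrow> tsym set" where
  "tape_syms M = {LMark, Blank} \<union> Sym ` tm_gamma M"

definition valid_tm :: "nat \<Rightarrow> nat set \<Rightarrow> tm \<Rightarrow> bool" where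
  "valid_tm k \<Sigma> M \<longleftrightarrow>
     tm_tapes M = k \<and> finite (tm_states M) \<and> finite (tm_gamma M) \<and> \<Sigma> \<subseteq> tm_gamma M \<and>
     tm_start M \<in> tm_states M \<and> tm_accept M \<subseteq> tm_final M \<and> tm_final M \<subseteq> tm_states M \<and>
     (\<forall>q \<in> tm_states M - tm_final M. \<forall>rs. length rs = k \<longrightarrow> set rs \<subseteq> tape_syms M \<longrightarrow>
        (case tm_delta M q rs of (q', ws, ms) \<Rightarrow>
           q' \<in> tm_states M \<and> length ws = k \<and> length ms = k \<and> set ws \<subseteq> tape_syms M \<and>
           (\<forall>i<k. (rs ! i = LMark \<longrightarrow> ws ! i = LMark \<and> ms ! i \<noteq> Lft) \<and>
                  (rs ! i \<noteq> LMark \<longrightarrow> ws ! i \<noteq> LMark))))"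

fun move :: "dir \<Rightarrow> nat \<Rightarrow> nat" where
  "move Lft h = h - 1"
| "move Stay h = h"
| "move Rgt h = h + 1"

definition tm_step :: "tm \<Rightarrow> config \<Rightarrow> config" where
  "tm_step M c = (case c of (q, tps, hs) \<Rightarrow>
     if q \<in> tm_final M then c else
     (let k = tm_tapes M;
          rs = map (\<lambda>i. (tps ! i) (hs ! i)) [0..<k] in
      case tm_delta M q rs of (q', ws, ms) \<Rightarrow>
        (q', map (\<lambda>i. (tps ! i)(hs ! i := ws ! i)) [0..<k],
             map (\<lambda>i. move (ms ! i) (hs ! i)) [0..<k])))"

definition tm_run :: "tm \<Rightarrow> nat \<Rightarrow> config \<Rightarrow> config" where
  "tm_run M t c = (tm_step M ^^ t) c"

definition input_tape :: "nat list \<Rightarrow> nat \<Rightarrow> tsym" where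
  "input_tape x = (\<lambda>i. if i = 0 then LMark else if i \<le> length x then Sym (x ! (i - 1)) else Blank)"

definition empty_tape :: "nat \<Rightarrow> tsym" where
  "empty_tape = (\<lambda>i. if i = 0 then LMark else Blank)"

definition init_config :: "tm \<Rightarrow> nat list \<Rightarrow> config" where
  "init_config M x = (tm_start M, input_tape x # replicate (tm_tapes M - 1) empty_tape,
                      replicate (tm_tapes M) 0)"

definition has_output :: "(nat \<Rightarrow> tsym) \<Rightarrow> nat list \<Rightarrow> bool" where
  "has_output tp y \<longleftrightarrow> tp 0 = LMark \<and> (\<forall>i < length y. tp (Suc i) = Sym (y ! i)) \<and>
                       tp (Suc (length y)) = Blank"

text \<open>f : Sigma* -> Sigma* is computed on a k-tape machine in linear time.
  The time bound is C*(n+1) (the literal bound C*n would force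
  the machine to halt immediately on the empty input).\<close>
definition lintime_computable :: "nat \<Rightarrow> nat set \<Rightarrow> (nat list \<Rightarrow> nat list) \<Rightarrow> bool" where
  "lintime_computable k \<Sigma> f \<longleftrightarrow>
     (\<exists>M C. valid_tm k \<Sigma> M \<and> C > (0::nat) \<and>
        (\<forall>x \<in> lists \<Sigma>. f x \<in> lists \<Sigma> \<and>
           (\<exists>t \<le> C * (length x + 1).
              (case tm_run M t (init_config M x) of (q, tps, hs) \<Rightarrow>
                 q \<in> tm_accept M \<and> has_output (tps ! 0) (f x)))))"

definition semigroup_generates :: "('g, 'b) monoid_scheme \<Rightarrow> 'g set \<Rightarrow> bool" where
  "semigroup_generates G S \<longleftrightarrow> S \<subseteq> carrier G \<and>
     (\<forall>g \<in> carrier G. \<exists>xs. xs \<noteq> [] \<and> set xs \<subseteq> S \<and> g = foldr (\<lambda>a b. a \<otimes>\<^bsub>G\<^esub> b) xs \<one>\<^bsub>G\<^esub>)"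

definition cayley_lintime_wrt :: "nat \<Rightarrow> ('g, 'b) monoid_scheme \<Rightarrow> 'g set \<Rightarrow> bool" where
  "cayley_lintime_wrt k G S \<longleftrightarrow>
     (\<exists>(\<Sigma>::nat set) L (\<psi>::nat list \<Rightarrow> 'g). finite \<Sigma> \<and> L \<subseteq> lists \<Sigma> \<and> bij_betw \<psi> L (carrier G) \<and>
        (\<forall>s \<in> S. \<exists>f. lintime_computable k \<Sigma> f \<and>
           (\<forall>w \<in> L. f w \<in> L \<and> \<psi> (f w) = \<psi> w \<otimes>\<^bsub>G\<^esub> s)))"

definition cayley_lintime :: "nat \<Rightarrow> ('g, 'b) monoid_scheme \<Rightarrow> bool" where
  "cayley_lintime k G \<longleftrightarrow> group G \<and>
     (\<exists>S. finite S \<and> semigroup_generates G S \<and> cayley_lintime_wrt k G S)"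

text \<open>Elements (f, v): f a finitely supported configuration of Z_2-lamps on Z^2
  (Z_2 represented by bool with xor), v in Z^2.
  (f, v)(g, w) = (f + v.g, v + w) where (v.g)(p) = g(p - v).\<close>
definition lamplighter2 :: "((int \<times> int \<Rightarrow> bool) \<times> (int \<times> int)) monoid" where
  "lamplighter2 = \<lparr> carrier = {(f, v). finite {p. f p}},
     mult = (\<lambda>(f, v) (g, w). (\<lambda>p. f p \<noteq> g (fst p - fst v, snd p - snd v),
                              (fst v + fst w, snd v + snd w))),
     one = (\<lambda>_. False, (0, 0)) \<rparr>"

end

theory Submission
  imports Defs "HOL-Library.Countable" "HOL-Library.Product_Lexorder"
begin

datatype st = Init | Scan nat "nat list" | Fin "nat list" | Rew | Cp | Acc

instance st :: countable by countable_datatype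

definition san :: "tsym \<Rightarrow> tsym \<Rightarrow> tsym" where
  "san r w = (if r = LMark then LMark else if w = LMark then r else w)"
definition sanm :: "tsym \<Rightarrow> dir \<Rightarrow> dir" where
  "sanm r m = (if r = LMark \<and> m = Lft then Stay else m)"

fun dl :: "(nat \<Rightarrow> nat \<Rightarrow> nat \<times> nat list) \<Rightarrow> (nat \<Rightarrow> nat list) \<Rightarrow> nat \<Rightarrow> st \<Rightarrow> tsym \<Rightarrow> tsym \<Rightarrow> st \<times> tsym \<times> tsym \<times> dir \<times> dir" where
  "dl dg fg q0 Init r0 r1 = (Scan q0 [], r0, r1, Rgt, Rgt)"
| "dl dg fg q0 (Scan q (c#p)) r0 r1 = (Scan q p, r0, Sym c, Stay, Rgt)"
| "dl dg fg q0 (Scan q []) r0 r1 = (case r0 of Sym a \<Rightarrow> (Scan (fst (dg q a)) (snd (dg q a)), r0, r1, Rgt, Stay)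
       | _ \<Rightarrow> (Fin (fg q), r0, r1, Stay, Stay))"
| "dl dg fg q0 (Fin (c#p)) r0 r1 = (Fin p, r0, Sym c, Stay, Rgt)"
| "dl dg fg q0 (Fin []) r0 r1 = (Rew, r0, r1, Stay, Stay)"
| "dl dg fg q0 Rew r0 r1 = (if r0 = LMark \<and> r1 = LMark then (Cp, r0, r1, Rgt, Rgt) else (Rew, r0, r1, Lft, Lft))"
| "dl dg fg q0 Cp r0 r1 = (case r1 of Sym c \<Rightarrow> (Cp, Sym c, r1, Rgt, Rgt) | _ \<Rightarrow> (Acc, Blank, r1, Stay, Stay))"
| "dl dg fg q0 Acc r0 r1 = (Acc, r0, r1, Stay, Stay)"

definition Pend :: "nat set \<Rightarrow> nat list set" where
  "Pend S = {xs. set xs \<subseteq> S \<and> length xs \<le> 2}"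

definition StSet :: "nat set \<Rightarrow> st set" where
  "StSet S = {Init, Rew, Cp, Acc} \<union> (\<lambda>(q,p). Scan q p) ` ({..<4} \<times> Pend S) \<union> Fin ` Pend S"

definition gtm :: "nat set \<Rightarrow> (nat \<Rightarrow> nat \<Rightarrow> nat \<times> nat list) \<Rightarrow> (nat \<Rightarrow> nat list) \<Rightarrow> nat \<Rightarrow> tm" where
  "gtm S dg fg q0 = \<lparr> tm_tapes = 2, tm_states = to_nat ` StSet S, tm_gamma = S,
     tm_start = to_nat Init, tm_final = {to_nat Acc}, tm_accept = {to_nat Acc},
     tm_delta = (\<lambda>q rs. case dl dg fg q0 (from_nat q) (rs!0) (rs!1) of (s', w0, w1, m0, m1) \<Rightarrow>
        (to_nat s', [san (rs!0) w0, san (rs!1) w1], [sanm (rs!0) m0, sanm (rs!1) m1])) \<rparr>"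

lemma step2: "tm_step (gtm S dg fg q0) (to_nat s, [t0,t1], [h0,h1]) =
  (if s = Acc then (to_nat s, [t0,t1],[h0,h1]) else
   case dl dg fg q0 s (t0 h0) (t1 h1) of (s', w0, w1, m0, m1) \<Rightarrow>
     (to_nat s', [t0(h0 := san (t0 h0) w0), t1(h1 := san (t1 h1) w1)],
      [move (sanm (t0 h0) m0) h0, move (sanm (t1 h1) m1) h1]))"
  by (auto simp: tm_step_def gtm_def numeral_2_eq_2 upt_rec split: prod.splits)

lemma run_Suc: "tm_run M (Suc n) c = tm_run M n (tm_step M c)"
  by (simp only: tm_run_def funpow_Suc_right comp_def)
lemma run_add: "tm_run M (a + b) c = tm_run M b (tm_run M a c)"
  by (simp only: tm_run_def add.commute[of a b] funpow_add comp_def)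
lemma run_plus1: "tm_run M (n + 1) c = tm_step M (tm_run M n c)"
  by (simp only: tm_run_def Suc_eq_plus1[symmetric] funpow.simps comp_def)
lemma run_0[simp]: "tm_run M 0 c = c" by (simp add: tm_run_def)

lemma it_LMark[simp]: "input_tape ys j = LMark \<longleftrightarrow> j = 0"
  by (simp add: input_tape_def)
lemma it_0[simp]: "input_tape ys 0 = LMark"
  by (simp add: input_tape_def)
lemma it_end[simp]: "input_tape ys (Suc (length ys)) = Blank"
  by (simp add: input_tape_def)
lemma it_nth: "i < length ys \<Longrightarrow> input_tape ys (Suc i) = Sym (ys!i)"
  by (simp add: input_tape_def)
lemma it_snoc: "(input_tape out)(Suc (length out) := Sym c) = input_tape (out@[c])"
  by (auto simp: input_tape_def nth_append fun_eq_iff le_Suc_eq)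

lemma san_same[simp]: "san r r = r" by (simp add: san_def)
lemma san_nl[simp]: "r \<noteq> LMark \<Longrightarrow> w \<noteq> LMark \<Longrightarrow> san r w = w" by (simp add: san_def)
lemma sanm_simps[simp]: "sanm r Stay = Stay" "sanm r Rgt = Rgt" "r \<noteq> LMark \<Longrightarrow> sanm r m = m"
  by (auto simp: sanm_def)

lemma pend_scan: "tm_run (gtm S dg fg q0) (length p) (to_nat (Scan q p), [t0, input_tape out], [h0, Suc (length out)])
   = (to_nat (Scan q []), [t0, input_tape (out@p)], [h0, Suc (length (out@p))])"
proof (induction p arbitrary: out)
  case Nil then show ?case by simp
next
  case (Cons c p)
  have "tm_step (gtm S dg fg q0) (to_nat (Scan q (c#p)), [t0, input_tape out], [h0, Suc (length out)])
     = (to_nat (Scan q p), [t0, input_tape (out@[c])], [h0, Suc (length (out@[c]))])"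
    by (simp add: step2 it_snoc)
  then show ?case using Cons[of "out@[c]"] by (simp add: run_Suc)
qed

lemma pend_fin: "tm_run (gtm S dg fg q0) (length p) (to_nat (Fin p), [t0, input_tape out], [h0, Suc (length out)])
   = (to_nat (Fin []), [t0, input_tape (out@p)], [h0, Suc (length (out@p))])"
proof (induction p arbitrary: out)
  case Nil then show ?case by simp
next
  case (Cons c p)
  have "tm_step (gtm S dg fg q0) (to_nat (Fin (c#p)), [t0, input_tape out], [h0, Suc (length out)])
     = (to_nat (Fin p), [t0, input_tape (out@[c])], [h0, Suc (length (out@[c]))])"
    by (simp add: step2 it_snoc)
  then show ?case using Cons[of "out@[c]"] by (simp add: run_Suc)
qed

fun gsteps :: "(nat \<Rightarrow> nat \<Rightarrow> nat \<times> nat list) \<Rightarrow> nat \<Rightarrow> nat list \<Rightarrow> nat \<times> nat list" where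
  "gsteps d q [] = (q, [])"
| "gsteps d q (a#w) = (let (q1,o1) = d q a; (q2,o2) = gsteps d q1 w in (q2, o1 @ o2))"

definition gfun :: "(nat \<Rightarrow> nat \<Rightarrow> nat \<times> nat list) \<Rightarrow> (nat \<Rightarrow> nat list) \<Rightarrow> nat \<Rightarrow> nat list \<Rightarrow> nat list" where
  "gfun d fg q w = (let (q', ou) = gsteps d q w in ou @ fg q')"

lemma scan_main: "x = u @ w \<Longrightarrow>
  tm_run (gtm S dg fg q0) (length w + length (snd (gsteps dg q w)) + 1)
     (to_nat (Scan q []), [input_tape x, input_tape out], [Suc (length u), Suc (length out)])
  = (to_nat (Fin (fg (fst (gsteps dg q w)))), [input_tape x, input_tape (out @ snd (gsteps dg q w))],
       [Suc (length x), Suc (length (out @ snd (gsteps dg q w)))])"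
proof (induction w arbitrary: u out q)
  case Nil
  then show ?case by (simp add: step2 run_Suc fun_upd_idem)
next
  case (Cons a w)
  obtain q1 o1 where d: "dg q a = (q1, o1)" by force
  obtain q2 o2 where g: "gsteps dg q1 w = (q2, o2)" by force
  have xa: "input_tape x (Suc (length u)) = Sym a" using Cons.prems by (simp add: it_nth)
  have s1: "tm_step (gtm S dg fg q0) (to_nat (Scan q []), [input_tape x, input_tape out], [Suc (length u), Suc (length out)])
     = (to_nat (Scan q1 o1), [input_tape x, input_tape out], [Suc (length (u@[a])), Suc (length out)])"
    using xa d by (simp add: step2 fun_upd_idem)
  have "length (a # w) + length (snd (gsteps dg q (a # w))) + 1 = Suc (length o1 + (length w + length o2 + 1))"
    using d g by simp
  moreover have "tm_run (gtm S dg fg q0) (Suc (length o1 + (length w + length o2 + 1)))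
      (to_nat (Scan q []), [input_tape x, input_tape out], [Suc (length u), Suc (length out)])
    = tm_run (gtm S dg fg q0) (length w + length o2 + 1) (tm_run (gtm S dg fg q0) (length o1)
        (to_nat (Scan q1 o1), [input_tape x, input_tape out], [Suc (length (u@[a])), Suc (length out)]))"
    by (simp only: run_Suc run_add s1)
  moreover have "tm_run (gtm S dg fg q0) (length o1)
        (to_nat (Scan q1 o1), [input_tape x, input_tape out], [Suc (length (u@[a])), Suc (length out)])
     = (to_nat (Scan q1 []), [input_tape x, input_tape (out@o1)], [Suc (length (u@[a])), Suc (length (out@o1))])"
    by (rule pend_scan)
  moreover have "tm_run (gtm S dg fg q0) (length w + length o2 + 1)
      (to_nat (Scan q1 []), [input_tape x, input_tape (out@o1)], [Suc (length (u@[a])), Suc (length (out@o1))])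
    = (to_nat (Fin (fg q2)), [input_tape x, input_tape ((out@o1) @ o2)],
       [Suc (length x), Suc (length ((out@o1) @ o2))])"
    using Cons.IH[where u="u@[a]" and out="out@o1" and q=q1] Cons.prems g by simp
  moreover have G: "gsteps dg q (a#w) = (q2, o1@o2)" using d g by simp
  moreover have cnt: "length (a#w) + length (o1@o2) + 1 = Suc (length o1 + (length w + length o2 + 1))" by simp
  ultimately show ?case unfolding G snd_conv fst_conv cnt by simp
qed

lemma rew_run:
  assumes t0: "\<And>j. t0 j = LMark \<longleftrightarrow> j = 0" and t1: "\<And>j. t1 j = LMark \<longleftrightarrow> j = 0"
  shows "k \<le> max h0 h1 \<Longrightarrow> tm_run (gtm S dg fg q0) k (to_nat Rew, [t0,t1],[h0,h1]) = (to_nat Rew, [t0,t1],[h0-k,h1-k])"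
proof (induction k)
  case 0 then show ?case by simp
next
  case (Suc k)
  have "h0 - k \<noteq> 0 \<or> h1 - k \<noteq> 0" using Suc.prems by linarith
  then have nb: "\<not> (t0 (h0-k) = LMark \<and> t1 (h1-k) = LMark)" by (simp add: t0 t1)
  have "tm_step (gtm S dg fg q0) (to_nat Rew, [t0,t1],[h0-k,h1-k]) = (to_nat Rew, [t0,t1],[h0-Suc k,h1-Suc k])"
    using nb t0 t1 by (auto simp: step2 fun_upd_idem sanm_def)
  then show ?case using Suc by (simp only: Suc_eq_plus1 run_add) (simp add: run_Suc)
qed

lemma rew_done:
  assumes t0: "\<And>j. t0 j = LMark \<longleftrightarrow> j = 0" and t1: "\<And>j. t1 j = LMark \<longleftrightarrow> j = 0"
  shows "tm_run (gtm S dg fg q0) (max h0 h1 + 1) (to_nat Rew, [t0,t1],[h0,h1]) = (to_nat Cp, [t0,t1],[1,1])"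
proof -
  have A: "tm_run (gtm S dg fg q0) (max h0 h1) (to_nat Rew, [t0,t1],[h0,h1]) = (to_nat Rew, [t0,t1],[0,0])"
    using rew_run[OF t0 t1, of "max h0 h1" h0 h1] by simp
  have B: "tm_step (gtm S dg fg q0) (to_nat Rew, [t0,t1],[0,0]) = (to_nat Cp, [t0,t1],[1,1])"
    using t0 t1 by (simp add: step2 fun_upd_idem)
  show ?thesis by (simp only: run_plus1 A B)
qed

definition ovr :: "(nat \<Rightarrow> tsym) \<Rightarrow> nat list \<Rightarrow> nat \<Rightarrow> nat \<Rightarrow> tsym" where
  "ovr t0 y j = (\<lambda>i. if 0 < i \<and> i \<le> j then Sym (y!(i-1)) else t0 i)"

lemma cp_run:
  assumes t0: "\<And>j. t0 j = LMark \<longleftrightarrow> j = 0"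
  shows "j \<le> length y \<Longrightarrow> tm_run (gtm S dg fg q0) j (to_nat Cp, [t0, input_tape y],[1,1])
          = (to_nat Cp, [ovr t0 y j, input_tape y],[Suc j, Suc j])"
proof (induction j)
  case 0 then show ?case by (simp add: ovr_def fun_eq_iff)
next
  case (Suc j)
  have a: "input_tape y (Suc j) = Sym (y!j)" using Suc.prems by (simp add: it_nth)
  have b: "ovr t0 y j (Suc j) \<noteq> LMark" using t0 by (simp add: ovr_def)
  have c: "(ovr t0 y j)(Suc j := Sym (y!j)) = ovr t0 y (Suc j)"
    by (auto simp: ovr_def fun_eq_iff le_Suc_eq)
  have "tm_step (gtm S dg fg q0) (to_nat Cp, [ovr t0 y j, input_tape y],[Suc j, Suc j])
     = (to_nat Cp, [ovr t0 y (Suc j), input_tape y],[Suc (Suc j), Suc (Suc j)])"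
    using a b c by (simp add: step2 fun_upd_idem)
  then show ?case using Suc by (simp only: Suc_eq_plus1 run_add) (simp add: run_Suc)
qed

lemma cp_done:
  assumes t0: "\<And>j. t0 j = LMark \<longleftrightarrow> j = 0"
  shows "\<exists>tp hs. tm_run (gtm S dg fg q0) (length y + 1) (to_nat Cp, [t0, input_tape y],[1,1])
          = (to_nat Acc, [tp, input_tape y], hs) \<and> has_output tp y"
proof -
  have b: "ovr t0 y (length y) (Suc (length y)) \<noteq> LMark" using t0 by (simp add: ovr_def)
  have B: "tm_step (gtm S dg fg q0) (to_nat Cp, [ovr t0 y (length y), input_tape y],[Suc (length y), Suc (length y)])
     = (to_nat Acc, [(ovr t0 y (length y))(Suc (length y) := Blank), input_tape y],[Suc (length y), Suc (length y)])"
    using b by (simp add: step2 fun_upd_idem)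
  have C: "has_output ((ovr t0 y (length y))(Suc (length y) := Blank)) y"
    using t0 by (auto simp: has_output_def ovr_def)
  have A: "tm_run (gtm S dg fg q0) (length y) (to_nat Cp, [t0, input_tape y],[1,1])
          = (to_nat Cp, [ovr t0 y (length y), input_tape y],[Suc (length y), Suc (length y)])"
    using cp_run[OF t0, of "length y" y] by simp
  have "tm_run (gtm S dg fg q0) (length y + 1) (to_nat Cp, [t0, input_tape y],[1,1])
     = (to_nat Acc, [(ovr t0 y (length y))(Suc (length y) := Blank), input_tape y],[Suc (length y), Suc (length y)])"
    by (simp only: run_plus1 A B)
  then show ?thesis using C by blast
qed

lemma gsteps_len: "(\<And>q a. length (snd (dg q a)) \<le> 2) \<Longrightarrow> length (snd (gsteps dg q w)) \<le> 2 * length w"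
proof (induction w arbitrary: q)
  case Nil then show ?case by simp
next
  case (Cons a w)
  obtain q1 o1 where d: "dg q a = (q1, o1)" by force
  obtain q2 o2 where g: "gsteps dg q1 w = (q2, o2)" by force
  have "length o1 \<le> 2" using Cons.prems[of q a] d by simp
  moreover have "length o2 \<le> 2 * length w" using Cons.IH[of q1] Cons.prems g by simp
  ultimately show ?case using d g by simp
qed

lemma gsteps_set: "(\<And>q a. a \<in> S \<Longrightarrow> set (snd (dg q a)) \<subseteq> S) \<Longrightarrow> set w \<subseteq> S \<Longrightarrow> set (snd (gsteps dg q w)) \<subseteq> S"
proof (induction w arbitrary: q)
  case Nil then show ?case by simp
next
  case (Cons a w)
  obtain q1 o1 where d: "dg q a = (q1, o1)" by force
  obtain q2 o2 where g: "gsteps dg q1 w = (q2, o2)" by force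
  have "set o1 \<subseteq> S" using Cons.prems(1)[of a q] Cons.prems(2) d by simp
  moreover have "set o2 \<subseteq> S" using Cons.IH[of q1] Cons.prems g by simp
  ultimately show ?case using d g by simp
qed

lemma gtm_run:
  shows "\<exists>tp t1 hs. tm_run (gtm S dg fg q0)
     (1 + (length x + length (snd (gsteps dg q0 x)) + 1) + length (fg (fst (gsteps dg q0 x))) + 1
        + (max (Suc (length x)) (Suc (length (gfun dg fg q0 x))) + 1) + (length (gfun dg fg q0 x) + 1))
     (init_config (gtm S dg fg q0) x) = (to_nat Acc, [tp, t1], hs) \<and> has_output tp (gfun dg fg q0 x)"
proof -
  let ?M = "gtm S dg fg q0"
  obtain q' ou where G: "gsteps dg q0 x = (q', ou)" by force
  let ?y = "ou @ fg q'"
  have y: "gfun dg fg q0 x = ?y" using G by (simp add: gfun_def)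
  have i: "init_config ?M x = (to_nat Init, [input_tape x, input_tape []], [0,0])"
    by (simp add: init_config_def gtm_def empty_tape_def input_tape_def numeral_2_eq_2 fun_eq_iff)
  have s1: "tm_run ?M 1 (to_nat Init, [input_tape x, input_tape []], [0,0]) = (to_nat (Scan q0 []), [input_tape x, input_tape []], [1, 1])"
    by (simp add: run_Suc step2 fun_upd_idem)
  have s2: "tm_run ?M (length x + length ou + 1) (to_nat (Scan q0 []), [input_tape x, input_tape []], [1, 1])
     = (to_nat (Fin (fg q')), [input_tape x, input_tape ou], [Suc (length x), Suc (length ou)])"
    using scan_main[of x "[]" x S dg fg q0 q0 "[]"] G by simp
  have s3: "tm_run ?M (length (fg q')) (to_nat (Fin (fg q')), [input_tape x, input_tape ou], [Suc (length x), Suc (length ou)])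
     = (to_nat (Fin []), [input_tape x, input_tape ?y], [Suc (length x), Suc (length ?y)])"
    by (rule pend_fin)
  have s4: "tm_run ?M 1 (to_nat (Fin []), [input_tape x, input_tape ?y], [Suc (length x), Suc (length ?y)])
     = (to_nat Rew, [input_tape x, input_tape ?y], [Suc (length x), Suc (length ?y)])"
    by (simp add: run_Suc step2 fun_upd_idem)
  have s5: "tm_run ?M (max (Suc (length x)) (Suc (length ?y)) + 1) (to_nat Rew, [input_tape x, input_tape ?y], [Suc (length x), Suc (length ?y)])
     = (to_nat Cp, [input_tape x, input_tape ?y], [1,1])"
    by (rule rew_done) simp_all
  obtain tp hs where s6: "tm_run ?M (length ?y + 1) (to_nat Cp, [input_tape x, input_tape ?y],[1,1])
          = (to_nat Acc, [tp, input_tape ?y], hs)" and ho: "has_output tp ?y"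
    using cp_done[of "input_tape x" S dg fg q0 ?y] by auto
  let ?C0 = "(to_nat Init, [input_tape x, input_tape []], [0::nat,0])"
  let ?T2 = "length x + length ou + 1"
  let ?T5 = "max (Suc (length x)) (Suc (length ?y)) + 1"
  have r2: "tm_run ?M (1 + ?T2) ?C0 = (to_nat (Fin (fg q')), [input_tape x, input_tape ou], [Suc (length x), Suc (length ou)])"
    by (simp only: run_add[of ?M 1 ?T2] s1 s2)
  have r3: "tm_run ?M (1 + ?T2 + length (fg q')) ?C0 = (to_nat (Fin []), [input_tape x, input_tape ?y], [Suc (length x), Suc (length ?y)])"
    by (simp only: run_add[of ?M "1 + ?T2" "length (fg q')"] r2 s3)
  have r4: "tm_run ?M (1 + ?T2 + length (fg q') + 1) ?C0 = (to_nat Rew, [input_tape x, input_tape ?y], [Suc (length x), Suc (length ?y)])"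
    by (simp only: run_add[of ?M "1 + ?T2 + length (fg q')" 1] r3 s4)
  have r5: "tm_run ?M (1 + ?T2 + length (fg q') + 1 + ?T5) ?C0 = (to_nat Cp, [input_tape x, input_tape ?y], [1,1])"
    by (simp only: run_add[of ?M "1 + ?T2 + length (fg q') + 1" ?T5] r4 s5)
  have r6: "tm_run ?M (1 + ?T2 + length (fg q') + 1 + ?T5 + (length ?y + 1)) ?C0 = (to_nat Acc, [tp, input_tape ?y], hs)"
    by (simp only: run_add[of ?M "1 + ?T2 + length (fg q') + 1 + ?T5" "length ?y + 1"] r5 s6)
  show ?thesis unfolding y G fst_conv snd_conv i using r6 ho by blast
qed

lemma delta_gtm: "tm_delta (gtm S dg fg q0) (to_nat s) [r0,r1] = (case dl dg fg q0 s r0 r1 of (s', w0, w1, m0, m1) \<Rightarrow>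
        (to_nat s', [san r0 w0, san r1 w1], [sanm r0 m0, sanm r1 m1]))"
  by (simp add: gtm_def)

lemma san_props: "(r = LMark \<longrightarrow> san r w = LMark) \<and> (r \<noteq> LMark \<longrightarrow> san r w \<noteq> LMark)"
  by (simp add: san_def)
lemma sanm_props: "r = LMark \<longrightarrow> sanm r m \<noteq> Lft"
  by (simp add: sanm_def)

lemma san_in: "r \<in> A \<Longrightarrow> w \<in> A \<Longrightarrow> LMark \<in> A \<Longrightarrow> san r w \<in> A"
  by (simp add: san_def)

lemma Pend_tl: "c # p \<in> Pend S \<Longrightarrow> p \<in> Pend S \<and> c \<in> S"
  by (auto simp: Pend_def)

lemma dl_ok:
  assumes s: "s \<in> StSet S" and r0: "r0 \<in> {LMark, Blank} \<union> Sym ` S" and r1: "r1 \<in> {LMark, Blank} \<union> Sym ` S"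
    and dgs: "\<And>q a. fst (dg q a) < 4" "\<And>q a. length (snd (dg q a)) \<le> 2" "\<And>q. length (fg q) \<le> 2"
       "\<And>q a. a \<in> S \<Longrightarrow> set (snd (dg q a)) \<subseteq> S" "\<And>q. set (fg q) \<subseteq> S" and q0: "q0 < 4"
    and e: "dl dg fg q0 s r0 r1 = (s', w0, w1, m0, m1)"
  shows "s' \<in> StSet S \<and> w0 \<in> {LMark, Blank} \<union> Sym ` S \<and> w1 \<in> {LMark, Blank} \<union> Sym ` S"
proof -
  have fgP: "fg q \<in> Pend S" for q using dgs by (simp add: Pend_def)
  have dgP: "a \<in> S \<Longrightarrow> snd (dg q a) \<in> Pend S" for q a using dgs by (simp add: Pend_def)
  have emp: "[] \<in> Pend S" by (simp add: Pend_def)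
  show ?thesis
  proof (cases s)
    case Init then show ?thesis using e r0 r1 q0 emp by (auto simp: StSet_def)
  next
    case (Scan q p)
    then have qp: "q < 4" "p \<in> Pend S" using s by (auto simp: StSet_def)
    show ?thesis
    proof (cases p)
      case Nil
      then show ?thesis using Scan e r0 r1 qp dgs fgP dgP by (auto simp: StSet_def split: tsym.splits)
    next
      case (Cons c p')
      then show ?thesis using Scan e r0 r1 qp Pend_tl[of c p' S] by (auto simp: StSet_def)
    qed
  next
    case (Fin p)
    then have qp: "p \<in> Pend S" using s by (auto simp: StSet_def)
    show ?thesis
    proof (cases p)
      case Nil
      then show ?thesis using Fin e r0 r1 by (auto simp: StSet_def)
    next
      case (Cons c p')
      then show ?thesis using Fin e r0 r1 qp Pend_tl[of c p' S] by (auto simp: StSet_def)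
    qed
  next
    case Rew then show ?thesis using e r0 r1 by (auto simp: StSet_def split: if_splits)
  next
    case Cp then show ?thesis using e r0 r1 by (auto simp: StSet_def split: tsym.splits)
  next
    case Acc then show ?thesis using e r0 r1 by (auto simp: StSet_def)
  qed
qed

lemma finite_StSet: "finite S \<Longrightarrow> finite (StSet S)"
  unfolding StSet_def Pend_def by (intro finite_UnI finite_imageI finite_cartesian_product finite_lists_length_le) auto

lemma gtm_valid:
  assumes fin: "finite S"
    and dgs: "\<And>q a. fst (dg q a) < 4" "\<And>q a. length (snd (dg q a)) \<le> 2" "\<And>q. length (fg q) \<le> 2"
       "\<And>q a. a \<in> S \<Longrightarrow> set (snd (dg q a)) \<subseteq> S" "\<And>q. set (fg q) \<subseteq> S" and q0: "q0 < 4"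
  shows "valid_tm 2 S (gtm S dg fg q0)"
  unfolding valid_tm_def
proof (intro conjI ballI allI impI)
  show "finite (tm_states (gtm S dg fg q0))" using finite_StSet[OF fin] by (simp add: gtm_def)
  show "tm_start (gtm S dg fg q0) \<in> tm_states (gtm S dg fg q0)" by (simp add: gtm_def StSet_def)
  show "tm_final (gtm S dg fg q0) \<subseteq> tm_states (gtm S dg fg q0)" by (simp add: gtm_def StSet_def)
next
  fix q rs
  assume q: "q \<in> tm_states (gtm S dg fg q0) - tm_final (gtm S dg fg q0)" and l: "length rs = 2"
    and rs: "set rs \<subseteq> tape_syms (gtm S dg fg q0)"
  obtain s where s: "s \<in> StSet S" "q = to_nat s" using q by (auto simp: gtm_def)
  obtain r0 r1 where rr: "rs = [r0, r1]" using l by (auto simp: numeral_2_eq_2 length_Suc_conv)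
  have ts: "tape_syms (gtm S dg fg q0) = {LMark, Blank} \<union> Sym ` S" by (simp add: tape_syms_def gtm_def)
  obtain s' w0 w1 m0 m1 where e: "dl dg fg q0 s r0 r1 = (s', w0, w1, m0, m1)" by (metis prod_cases5)
  have ok: "s' \<in> StSet S \<and> w0 \<in> {LMark, Blank} \<union> Sym ` S \<and> w1 \<in> {LMark, Blank} \<union> Sym ` S"
    using dl_ok[OF s(1) _ _ dgs q0 e] rs rr ts by auto
  have d: "tm_delta (gtm S dg fg q0) q rs = (to_nat s', [san r0 w0, san r1 w1], [sanm r0 m0, sanm r1 m1])"
    unfolding s(2) rr delta_gtm e by simp
  have r01: "r0 \<in> {LMark, Blank} \<union> Sym ` S" "r1 \<in> {LMark, Blank} \<union> Sym ` S"
    using rs unfolding rr ts by auto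
  have "san r0 w0 \<in> {LMark, Blank} \<union> Sym ` S" "san r1 w1 \<in> {LMark, Blank} \<union> Sym ` S"
    using ok by (intro san_in r01; simp)+
  then show "case tm_delta (gtm S dg fg q0) q rs of (q', ws, ms) \<Rightarrow>
           q' \<in> tm_states (gtm S dg fg q0) \<and> length ws = 2 \<and> length ms = 2 \<and> set ws \<subseteq> tape_syms (gtm S dg fg q0) \<and>
           (\<forall>i<2. (rs ! i = LMark \<longrightarrow> ws ! i = LMark \<and> ms ! i \<noteq> Lft) \<and> (rs ! i \<noteq> LMark \<longrightarrow> ws ! i \<noteq> LMark))"
    unfolding d using ok ts rr san_props sanm_props
    by (auto simp: gtm_def less_Suc_eq numeral_2_eq_2)
qed (auto simp: gtm_def fin)

lemma gsm_lintime:
  assumes fin: "finite S"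
    and dgs: "\<And>q a. fst (dg q a) < 4" "\<And>q a. length (snd (dg q a)) \<le> 2" "\<And>q. length (fg q) \<le> 2"
       "\<And>q a. a \<in> S \<Longrightarrow> set (snd (dg q a)) \<subseteq> S" "\<And>q. set (fg q) \<subseteq> S" and q0: "q0 < 4"
  shows "lintime_computable 2 S (gfun dg fg q0)"
proof -
  have V: "valid_tm 2 S (gtm S dg fg q0)" by (rule gtm_valid[OF fin dgs q0])
  have P: "gfun dg fg q0 x \<in> lists S \<and> (\<exists>t\<le>12 * (length x + 1). case tm_run (gtm S dg fg q0) t (init_config (gtm S dg fg q0) x) of
       (q, tps, hs) \<Rightarrow> q \<in> tm_accept (gtm S dg fg q0) \<and> has_output (tps ! 0) (gfun dg fg q0 x))"
    if x: "x \<in> lists S" for x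
  proof
    obtain q' ou where G: "gsteps dg q0 x = (q', ou)" by force
    have y: "gfun dg fg q0 x = ou @ fg q'" using G by (simp add: gfun_def)
    have so: "set ou \<subseteq> S" using gsteps_set[of S dg x q0] dgs(4) x G by auto
    then show "gfun dg fg q0 x \<in> lists S" using y dgs(5)[of q'] by auto
    have lo: "length ou \<le> 2 * length x" using gsteps_len[of dg q0 x] dgs(2) G by simp
    have lf: "length (fg q') \<le> 2" by (rule dgs(3))
    let ?T = "1 + (length x + length (snd (gsteps dg q0 x)) + 1) + length (fg (fst (gsteps dg q0 x))) + 1
        + (max (Suc (length x)) (Suc (length (gfun dg fg q0 x))) + 1) + (length (gfun dg fg q0 x) + 1)"
    obtain tp t1 hs where R: "tm_run (gtm S dg fg q0) ?T
       (init_config (gtm S dg fg q0) x) = (to_nat Acc, [tp, t1], hs)" and ho: "has_output tp (gfun dg fg q0 x)"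
      using gtm_run by blast
    have bound: "?T \<le> 12 * (length x + 1)"
      using lo lf unfolding y G by (simp add: max_def)
    show "\<exists>t\<le>12 * (length x + 1). case tm_run (gtm S dg fg q0) t (init_config (gtm S dg fg q0) x) of
       (q, tps, hs) \<Rightarrow> q \<in> tm_accept (gtm S dg fg q0) \<and> has_output (tps ! 0) (gfun dg fg q0 x)"
      using bound R ho by (intro exI[of _ ?T]) (simp add: gtm_def)
  qed
  show ?thesis unfolding lintime_computable_def
    using V P by (intro exI[of _ "gtm S dg fg q0"] exI[of _ "12::nat"]) auto
qed

lemma ll_mult[simp]: "mult lamplighter2 (f, v) (g, w) =
   (\<lambda>p. f p \<noteq> g (fst p - fst v, snd p - snd v), (fst v + fst w, snd v + snd w))"
  by (simp add: lamplighter2_def)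
lemma ll_one[simp]: "one lamplighter2 = (\<lambda>_. False, (0, 0))"
  by (simp add: lamplighter2_def)
lemma ll_carrier: "x \<in> carrier lamplighter2 \<longleftrightarrow> finite {p. fst x p}"
  by (cases x) (simp add: lamplighter2_def)

lemma fin_shift: "finite {p. g p} \<Longrightarrow> finite {p :: int \<times> int. g (fst p - a, snd p - b)}"
proof -
  assume "finite {p. g p}"
  then have "finite ((\<lambda>q. (fst q + a, snd q + b)) ` {p. g p})" by simp
  moreover have "{p :: int \<times> int. g (fst p - a, snd p - b)} \<subseteq> (\<lambda>q. (fst q + a, snd q + b)) ` {p. g p}"
  proof
    fix p :: "int \<times> int" assume "p \<in> {p. g (fst p - a, snd p - b)}"
    then show "p \<in> (\<lambda>q. (fst q + a, snd q + b)) ` {p. g p}"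
      by (intro image_eqI[of _ _ "(fst p - a, snd p - b)"]) auto
  qed
  ultimately show ?thesis by (rule finite_subset[rotated])
qed

lemma ll_group: "group lamplighter2"
proof (rule groupI)
  fix x y assume x: "x \<in> carrier lamplighter2" and y: "y \<in> carrier lamplighter2"
  obtain f v where xf: "x = (f, v)" by (metis surj_pair)
  obtain g w where yg: "y = (g, w)" by (metis surj_pair)
  have "finite {p. f p}" using x xf by (simp add: ll_carrier)
  moreover have "finite {p. g (fst p - fst v, snd p - snd v)}" using y yg fin_shift by (simp add: ll_carrier)
  ultimately have "finite ({p. f p} \<union> {p. g (fst p - fst v, snd p - snd v)})" by simp
  then have "finite {p. f p \<noteq> g (fst p - fst v, snd p - snd v)}" by (rule finite_subset[rotated]) auto
  then show "x \<otimes>\<^bsub>lamplighter2\<^esub> y \<in> carrier lamplighter2" using xf yg by (simp add: ll_carrier)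
next
  show "\<one>\<^bsub>lamplighter2\<^esub> \<in> carrier lamplighter2" by (simp add: ll_carrier)
next
  fix x y z assume "x \<in> carrier lamplighter2" "y \<in> carrier lamplighter2" "z \<in> carrier lamplighter2"
  obtain f v where xf: "x = (f, v)" by (metis surj_pair)
  obtain g w where yg: "y = (g, w)" by (metis surj_pair)
  obtain h u where zh: "z = (h, u)" by (metis surj_pair)
  show "x \<otimes>\<^bsub>lamplighter2\<^esub> y \<otimes>\<^bsub>lamplighter2\<^esub> z = x \<otimes>\<^bsub>lamplighter2\<^esub> (y \<otimes>\<^bsub>lamplighter2\<^esub> z)"
    using xf yg zh by (auto simp: fun_eq_iff algebra_simps)
next
  fix x assume "x \<in> carrier lamplighter2"
  then show "\<one>\<^bsub>lamplighter2\<^esub> \<otimes>\<^bsub>lamplighter2\<^esub> x = x" by (cases x) simp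
next
  fix x assume x: "x \<in> carrier lamplighter2"
  obtain g w where xg: "x = (g, w)" by (metis surj_pair)
  let ?y = "(\<lambda>p. g (fst p + fst w, snd p + snd w), (- fst w, - snd w))"
  have "finite {p. g (fst p - (- fst w), snd p - (- snd w))}" using x xg fin_shift[of g "- fst w" "- snd w"] by (simp add: ll_carrier)
  then have "?y \<in> carrier lamplighter2" by (simp add: ll_carrier)
  moreover have "?y \<otimes>\<^bsub>lamplighter2\<^esub> x = \<one>\<^bsub>lamplighter2\<^esub>" using xg by (simp add: fun_eq_iff)
  ultimately show "\<exists>y\<in>carrier lamplighter2. y \<otimes>\<^bsub>lamplighter2\<^esub> x = \<one>\<^bsub>lamplighter2\<^esub>" by blast
qed


definition tg :: "(int \<times> int \<Rightarrow> bool) \<times> (int \<times> int)" where "tg = (\<lambda>p. p = (0,0), (0,0))"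
definition mv :: "int \<Rightarrow> int \<Rightarrow> (int \<times> int \<Rightarrow> bool) \<times> (int \<times> int)" where "mv a b = (\<lambda>_. False, (a,b))"
definition Gens where "Gens = {tg, mv 1 0, mv (-1) 0, mv 0 1, mv 0 (-1)}"

lemma Gens_carrier: "Gens \<subseteq> carrier lamplighter2"
  by (auto simp: Gens_def tg_def mv_def ll_carrier)

inductive_set Reach where
  r_one: "\<one>\<^bsub>lamplighter2\<^esub> \<in> Reach"
| r_step: "g \<in> Reach \<Longrightarrow> s \<in> Gens \<Longrightarrow> g \<otimes>\<^bsub>lamplighter2\<^esub> s \<in> Reach"

lemma foldr_closed: "set xs \<subseteq> carrier lamplighter2 \<Longrightarrow> y \<in> carrier lamplighter2 \<Longrightarrow>
    foldr (\<lambda>a b. a \<otimes>\<^bsub>lamplighter2\<^esub> b) xs y \<in> carrier lamplighter2"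
proof (induction xs)
  case Nil then show ?case by simp
next
  case (Cons x xs)
  then show ?case using group.is_monoid[OF ll_group] monoid.m_closed by fastforce
qed

lemma foldr_shift: "set xs \<subseteq> carrier lamplighter2 \<Longrightarrow> y \<in> carrier lamplighter2 \<Longrightarrow>
    foldr (\<lambda>a b. a \<otimes>\<^bsub>lamplighter2\<^esub> b) xs y = foldr (\<lambda>a b. a \<otimes>\<^bsub>lamplighter2\<^esub> b) xs \<one>\<^bsub>lamplighter2\<^esub> \<otimes>\<^bsub>lamplighter2\<^esub> y"
proof (induction xs)
  case Nil
  then show ?case using group.is_monoid[OF ll_group] monoid.l_one by fastforce
next
  case (Cons x xs)
  have M: "monoid lamplighter2" using group.is_monoid[OF ll_group] .
  have c: "foldr (\<lambda>a b. a \<otimes>\<^bsub>lamplighter2\<^esub> b) xs \<one>\<^bsub>lamplighter2\<^esub> \<in> carrier lamplighter2"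
    using Cons.prems foldr_closed monoid.one_closed[OF M] by auto
  have x: "x \<in> carrier lamplighter2" using Cons.prems by auto
  show ?case using Cons monoid.m_assoc[OF M x c Cons.prems(2)] by simp
qed

lemma Reach_foldr: "g \<in> Reach \<Longrightarrow> \<exists>xs. set xs \<subseteq> Gens \<and> g = foldr (\<lambda>a b. a \<otimes>\<^bsub>lamplighter2\<^esub> b) xs \<one>\<^bsub>lamplighter2\<^esub>"
proof (induction rule: Reach.induct)
  case r_one
  then show ?case by (intro exI[of _ "[]"]) simp
next
  case (r_step g s)
  then obtain xs where xs: "set xs \<subseteq> Gens" "g = foldr (\<lambda>a b. a \<otimes>\<^bsub>lamplighter2\<^esub> b) xs \<one>\<^bsub>lamplighter2\<^esub>" by blast
  have M: "monoid lamplighter2" using group.is_monoid[OF ll_group] .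
  have sc: "s \<in> carrier lamplighter2" using r_step Gens_carrier by auto
  have "foldr (\<lambda>a b. a \<otimes>\<^bsub>lamplighter2\<^esub> b) (xs @ [s]) \<one>\<^bsub>lamplighter2\<^esub>
      = foldr (\<lambda>a b. a \<otimes>\<^bsub>lamplighter2\<^esub> b) xs s"
    using monoid.r_one[OF M sc] by simp
  also have "\<dots> = g \<otimes>\<^bsub>lamplighter2\<^esub> s"
    using foldr_shift[of xs s] xs Gens_carrier sc by auto
  finally show ?case using xs r_step by (intro exI[of _ "xs @ [s]"]) auto
qed

lemma reach_x: "(f, v) \<in> Reach \<Longrightarrow> (f, (fst v + 1, snd v)) \<in> Reach \<and> (f, (fst v - 1, snd v)) \<in> Reach
   \<and> (f, (fst v, snd v + 1)) \<in> Reach \<and> (f, (fst v, snd v - 1)) \<in> Reach"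
proof -
  assume r: "(f, v) \<in> Reach"
  have "(f, v) \<otimes>\<^bsub>lamplighter2\<^esub> mv 1 0 \<in> Reach" "(f, v) \<otimes>\<^bsub>lamplighter2\<^esub> mv (-1) 0 \<in> Reach"
     "(f, v) \<otimes>\<^bsub>lamplighter2\<^esub> mv 0 1 \<in> Reach" "(f, v) \<otimes>\<^bsub>lamplighter2\<^esub> mv 0 (-1) \<in> Reach"
    using r by (auto intro!: r_step simp: Gens_def)
  then show ?thesis by (simp add: mv_def)
qed

lemma reach_mv1: "(f, v) \<in> Reach \<Longrightarrow> (f, (fst v + a, snd v)) \<in> Reach"
proof (induction a rule: int_induct[where k=0])
  case base then show ?case by simp
next
  case (step1 i) then show ?case using reach_x[of f "(fst v + i, snd v)"] by (simp add: add.assoc)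
next
  case (step2 i) then show ?case using reach_x[of f "(fst v + i, snd v)"] by (simp add: algebra_simps)
qed

lemma reach_mv2: "(f, v) \<in> Reach \<Longrightarrow> (f, (fst v, snd v + b)) \<in> Reach"
proof (induction b rule: int_induct[where k=0])
  case base then show ?case by simp
next
  case (step1 i) then show ?case using reach_x[of f "(fst v, snd v + i)"] by (simp add: add.assoc)
next
  case (step2 i) then show ?case using reach_x[of f "(fst v, snd v + i)"] by (simp add: algebra_simps)
qed

lemma reach_mv: "(f, v) \<in> Reach \<Longrightarrow> (f, w) \<in> Reach"
proof -
  assume a: "(f, v) \<in> Reach"
  have 1: "(f, (fst w, snd v)) \<in> Reach" using reach_mv1[OF a, of "fst w - fst v"] by simp
  have "(f, (fst w, snd w)) \<in> Reach" using reach_mv2[OF 1, of "snd w - snd v"] by simp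
  then show ?thesis by simp
qed

lemma reach_tog: "(f, v) \<in> Reach \<Longrightarrow> (\<lambda>p. f p \<noteq> (p = w), v) \<in> Reach"
proof -
  assume "(f, v) \<in> Reach"
  then have "(f, w) \<in> Reach" by (rule reach_mv)
  then have "(f, w) \<otimes>\<^bsub>lamplighter2\<^esub> tg \<in> Reach" by (auto intro!: r_step simp: Gens_def)
  moreover have "(f, w) \<otimes>\<^bsub>lamplighter2\<^esub> tg = (\<lambda>p. f p \<noteq> (p = w), w)"
    by (auto simp: tg_def fun_eq_iff prod_eq_iff)
  ultimately show ?thesis using reach_mv by metis
qed

lemma reach_fin: "finite F \<Longrightarrow> (\<lambda>p. p \<in> F, v) \<in> Reach"
proof (induction F arbitrary: v rule: finite_induct)
  case empty
  have "(\<lambda>_. False, (0::int, 0::int)) \<in> Reach" using r_one by simp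
  then show ?case using reach_mv by fastforce
next
  case (insert x F)
  have "(\<lambda>p. (p \<in> F) \<noteq> (p = x), v) \<in> Reach" using reach_tog insert by blast
  moreover have "(\<lambda>p. (p \<in> F) \<noteq> (p = x)) = (\<lambda>p. p \<in> insert x F)" using insert by auto
  ultimately show ?case by simp
qed

lemma ll_generates: "semigroup_generates lamplighter2 Gens"
  unfolding semigroup_generates_def
proof (intro conjI ballI)
  show "Gens \<subseteq> carrier lamplighter2" by (rule Gens_carrier)
  fix g assume g: "g \<in> carrier lamplighter2"
  obtain f v where gf: "g = (f, v)" by (metis surj_pair)
  have "finite {p. f p}" using g gf by (simp add: ll_carrier)
  then have "(\<lambda>p. p \<in> {p. f p}, v) \<in> Reach" by (rule reach_fin)
  then have "g \<in> Reach" using gf by simp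
  then obtain xs where xs: "set xs \<subseteq> Gens" "g = foldr (\<lambda>a b. a \<otimes>\<^bsub>lamplighter2\<^esub> b) xs \<one>\<^bsub>lamplighter2\<^esub>"
    using Reach_foldr by blast
  show "\<exists>xs. xs \<noteq> [] \<and> set xs \<subseteq> Gens \<and> g = foldr (\<lambda>a b. a \<otimes>\<^bsub>lamplighter2\<^esub> b) xs \<one>\<^bsub>lamplighter2\<^esub>"
  proof (cases "xs = []")
    case False then show ?thesis using xs by blast
  next
    case True
    have "foldr (\<lambda>a b. a \<otimes>\<^bsub>lamplighter2\<^esub> b) [mv 1 0, mv (-1) 0] \<one>\<^bsub>lamplighter2\<^esub> = \<one>\<^bsub>lamplighter2\<^esub>"
      by (simp add: mv_def)
    then show ?thesis using True xs by (intro exI[of _ "[mv 1 0, mv (-1) 0]"]) (auto simp: Gens_def)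
  qed
qed

definition enc1 :: "nat \<Rightarrow> nat \<Rightarrow> int \<Rightarrow> nat list" where
  "enc1 a b z = (if z \<ge> 0 then replicate (nat z) a else replicate (nat (-z)) b)"
definition ep :: "int \<times> int \<Rightarrow> nat list" where
  "ep q = enc1 0 1 (fst q) @ enc1 2 3 (snd q) @ [4]"
definition RR :: "(int \<times> int \<Rightarrow> bool) \<Rightarrow> int \<times> int \<Rightarrow> (int \<times> int) set" where
  "RR f v = {q. f (fst q + fst v, snd q + snd v)}"
definition E :: "(int \<times> int \<Rightarrow> bool) \<times> (int \<times> int) \<Rightarrow> nat list" where
  "E g = ep (snd g) @ concat (map ep (sorted_list_of_set (RR (fst g) (snd g))))"

lemma enc1_set: "set (enc1 a b z) \<subseteq> {a, b}"
  by (auto simp: enc1_def)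

lemma enc1_inj: "a \<noteq> b \<Longrightarrow> enc1 a b z = enc1 a b z' \<Longrightarrow> z = z'"
  by (auto simp: enc1_def replicate_eq_replicate split: if_splits)

lemma tw: "(\<forall>c\<in>set u. P c) \<Longrightarrow> (w = [] \<or> \<not> P (hd w)) \<Longrightarrow> takeWhile P (u @ w) = u \<and> dropWhile P (u @ w) = w"
  by (induction u) (cases w; auto)+

lemma tw_enc: "set u \<subseteq> {a,b} \<Longrightarrow> P a \<Longrightarrow> P b \<Longrightarrow> (w = [] \<or> \<not> P (hd w)) \<Longrightarrow>
    takeWhile P (u @ w) = u \<and> dropWhile P (u @ w) = w"
  by (rule tw) auto

lemma ep_A: "takeWhile (\<lambda>c::nat. c < 2) (ep q @ r) = enc1 0 1 (fst q) \<and>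
    dropWhile (\<lambda>c::nat. c < 2) (ep q @ r) = enc1 2 3 (snd q) @ 4 # r"
proof -
  have "hd (enc1 2 3 (snd q) @ 4 # r) \<in> {2,3,4}"
    using enc1_set[of 2 3 "snd q"] by (cases "enc1 2 3 (snd q)") auto
  then have "\<not> hd (enc1 2 3 (snd q) @ 4 # r) < 2" by auto
  then have "takeWhile (\<lambda>c::nat. c < 2) (enc1 0 1 (fst q) @ (enc1 2 3 (snd q) @ 4 # r)) = enc1 0 1 (fst q) \<and>
    dropWhile (\<lambda>c::nat. c < 2) (enc1 0 1 (fst q) @ (enc1 2 3 (snd q) @ 4 # r)) = enc1 2 3 (snd q) @ 4 # r"
    by (intro tw_enc[OF enc1_set]) auto
  then show ?thesis by (simp add: ep_def)
qed

lemma ep_B: "takeWhile (\<lambda>c::nat. c < 4) (enc1 2 3 y @ 4 # r) = enc1 2 3 y \<and>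
    dropWhile (\<lambda>c::nat. c < 4) (enc1 2 3 y @ 4 # r) = 4 # r"
  by (intro tw_enc[OF enc1_set]) auto

lemma ep_prefix: "ep q @ r = ep q' @ r' \<Longrightarrow> q = q' \<and> r = r'"
proof -
  assume h: "ep q @ r = ep q' @ r'"
  have t1: "takeWhile (\<lambda>c::nat. c < 2) (ep q @ r) = takeWhile (\<lambda>c::nat. c < 2) (ep q' @ r')"
    by (simp only: h)
  have d1: "dropWhile (\<lambda>c::nat. c < 2) (ep q @ r) = dropWhile (\<lambda>c::nat. c < 2) (ep q' @ r')"
    by (simp only: h)
  have "enc1 0 1 (fst q) = enc1 0 1 (fst q')" using t1 by (simp only: ep_A)
  then have x: "fst q = fst q'" using enc1_inj[of 0 1] by simp
  have e2: "enc1 2 3 (snd q) @ 4 # r = enc1 2 3 (snd q') @ 4 # r'" using d1 by (simp only: ep_A)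
  have t2: "takeWhile (\<lambda>c::nat. c < 4) (enc1 2 3 (snd q) @ 4 # r) = takeWhile (\<lambda>c::nat. c < 4) (enc1 2 3 (snd q') @ 4 # r')"
    by (simp only: e2)
  have d2: "dropWhile (\<lambda>c::nat. c < 4) (enc1 2 3 (snd q) @ 4 # r) = dropWhile (\<lambda>c::nat. c < 4) (enc1 2 3 (snd q') @ 4 # r')"
    by (simp only: e2)
  have "enc1 2 3 (snd q) = enc1 2 3 (snd q')" using t2 by (simp only: ep_B)
  moreover have "4 # r = 4 # r'" using d2 by (simp only: ep_B)
  ultimately have "snd q = snd q' \<and> r = r'" using enc1_inj[of 2 3] by simp
  then show ?thesis using x by (simp add: prod_eq_iff)
qed

lemma ep_ne: "ep q \<noteq> []" by (simp add: ep_def)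

lemma concat_ep_inj: "concat (map ep xs) = concat (map ep ys) \<Longrightarrow> xs = ys"
proof (induction xs arbitrary: ys)
  case Nil then show ?case using ep_ne by (cases ys) auto
next
  case (Cons x xs)
  show ?case
  proof (cases ys)
    case Nil then show ?thesis using Cons.prems ep_ne by simp
  next
    case (Cons y ys')
    then have "ep x @ concat (map ep xs) = ep y @ concat (map ep ys')" using Cons.prems by simp
    then have "x = y \<and> concat (map ep xs) = concat (map ep ys')" by (rule ep_prefix)
    then show ?thesis using Cons.IH Cons by simp
  qed
qed

lemma RR_fin: "finite {p. f p} \<Longrightarrow> finite (RR f v)"
  using fin_shift[of f "- fst v" "- snd v"] by (simp add: RR_def)

lemma E_inj: "inj_on E (carrier lamplighter2)"
proof (rule inj_onI)
  fix g g' assume g: "g \<in> carrier lamplighter2" and g': "g' \<in> carrier lamplighter2" and e: "E g = E g'"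
  obtain f v where gf: "g = (f, v)" by (metis surj_pair)
  obtain f' v' where gf': "g' = (f', v')" by (metis surj_pair)
  have v: "v = v'" and c: "concat (map ep (sorted_list_of_set (RR f v))) = concat (map ep (sorted_list_of_set (RR f' v')))"
    using ep_prefix[of v _ v'] e gf gf' by (auto simp: E_def)
  have fin: "finite (RR f v)" "finite (RR f' v')" using g g' gf gf' RR_fin by (auto simp: ll_carrier)
  have "RR f v = RR f' v'" using concat_ep_inj[OF c] fin sorted_list_of_set_inject by blast
  moreover have "\<And>f p. f p = ((fst p - fst v, snd p - snd v) \<in> RR f v)" by (simp add: RR_def)
  ultimately have "f p = f' p" for p using v by metis
  then show "g = g'" using gf gf' v by auto
qed

lemma gsteps_copy: "(\<forall>c\<in>set u. d q c = (q, [c])) \<Longrightarrow> gsteps d q u = (q, u)"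
  by (induction u) auto

lemma gsteps_append: "gsteps d q u = (q1, o1) \<Longrightarrow> gsteps d q1 w = (q2, o2) \<Longrightarrow> gsteps d q (u @ w) = (q2, o1 @ o2)"
proof (induction u arbitrary: q o1)
  case Nil then show ?case by simp
next
  case (Cons a u)
  obtain qa oa where da: "d q a = (qa, oa)" by force
  obtain qb ob where gb: "gsteps d qa u = (qb, ob)" by force
  have "qb = q1" "o1 = oa @ ob" using Cons.prems da gb by auto
  then have gb': "gsteps d qa u = (q1, ob)" using gb by simp
  show ?case using Cons.IH[OF gb' Cons.prems(2)] da \<open>o1 = oa @ ob\<close> by simp
qed

lemma gfun_append: "gsteps d q u = (q1, o1) \<Longrightarrow> gfun d fg q (u @ w) = o1 @ gfun d fg q1 w"
proof -
  assume a: "gsteps d q u = (q1, o1)"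
  obtain q2 o2 where b: "gsteps d q1 w = (q2, o2)" by force
  show ?thesis using gsteps_append[OF a b] b by (simp add: gfun_def)
qed

lemma sl_eq: "sorted_wrt (<) xs \<Longrightarrow> sorted_list_of_set (set xs) = xs"
  by (metis sorted_list_of_set.finite_set_strict_sorted strict_sorted_equal finite_set
      sorted_list_of_set.set_sorted_key_list_of_set sorted_list_of_set.strict_sorted_key_list_of_set)

lemma sl_insert_min: "finite Y \<Longrightarrow> (\<forall>y\<in>Y. q < y) \<Longrightarrow> sorted_list_of_set (insert q Y) = q # sorted_list_of_set Y"
proof -
  assume f: "finite Y" and m: "\<forall>y\<in>Y. q < y"
  have "sorted_wrt (<) (q # sorted_list_of_set Y)"
    using m f by (simp add: sorted_list_of_set.strict_sorted_key_list_of_set)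
  then have "sorted_list_of_set (set (q # sorted_list_of_set Y)) = q # sorted_list_of_set Y" by (rule sl_eq)
  then show ?thesis using f by simp
qed

lemma enc1_nw: "4 \<notin> set (enc1 0 1 x @ enc1 2 3 y)"
  using enc1_set[of 0 1 x] enc1_set[of 2 3 y] by auto

lemma ep_split: "ep q = (enc1 0 1 (fst q) @ enc1 2 3 (snd q)) @ [4]"
  by (simp add: ep_def)

lemma ep_zero: "ep (0,0) = [4]" by (simp add: ep_def enc1_def)

lemma enc1_neg: "z < 0 \<Longrightarrow> \<exists>k. enc1 a b z = b # replicate k b \<and> enc1 a b (z+1) = replicate k b"
proof -
  assume z: "z < 0"
  obtain k where k: "nat (-z) = Suc k" using z by (metis gr0_implies_Suc zero_less_nat_eq neg_0_less_iff_less)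
  have "nat (-(z+1)) = k" using k by simp
  then show ?thesis using z k by (intro exI[of _ k]) (auto simp: enc1_def)
qed

lemma enc1_pos: "z > 0 \<Longrightarrow> \<exists>k. enc1 a b z = a # replicate k a"
proof -
  assume z: "z > 0"
  obtain k where k: "nat z = Suc k" using z by (metis gr0_implies_Suc zero_less_nat_eq)
  then show ?thesis using z by (auto simp: enc1_def)
qed

lemma ep_neg: "q < (0,0) \<Longrightarrow> \<exists>c w'. ep q = c # w' @ [4] \<and> c \<in> {1,3} \<and> 4 \<notin> set w'"
proof -
  assume q: "q < (0,0)"
  obtain x y where xy: "q = (x, y)" by force
  show ?thesis
  proof (cases "x < 0")
    case True
    then obtain k where "enc1 0 1 x = 1 # replicate k 1" using enc1_neg[of x 0 1] by auto
    then show ?thesis using xy enc1_set[of 2 3 y]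
      by (intro exI[of _ 1] exI[of _ "replicate k 1 @ enc1 2 3 y"]) (auto simp: ep_def)
  next
    case False
    then have "x = 0" "y < 0" using q xy by auto
    then obtain k where "enc1 2 3 y = 3 # replicate k 3" using enc1_neg[of y 2 3] by auto
    then show ?thesis using xy \<open>x = 0\<close>
      by (intro exI[of _ 3] exI[of _ "replicate k 3"]) (auto simp: ep_def enc1_def)
  qed
qed

lemma ep_pos: "q > (0,0) \<Longrightarrow> \<exists>c w'. ep q = c # w' @ [4] \<and> c \<in> {0,2} \<and> 4 \<notin> set w'"
proof -
  assume q: "q > (0,0)"
  obtain x y where xy: "q = (x, y)" by force
  show ?thesis
  proof (cases "x > 0")
    case True
    then obtain k where "enc1 0 1 x = 0 # replicate k 0" using enc1_pos[of x 0 1] by auto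
    then show ?thesis using xy enc1_set[of 2 3 y]
      by (intro exI[of _ 0] exI[of _ "replicate k 0 @ enc1 2 3 y"]) (auto simp: ep_def)
  next
    case False
    then have "x = 0" "y > 0" using q xy by auto
    then obtain k where "enc1 2 3 y = 2 # replicate k 2" using enc1_pos[of y 2 3] by auto
    then show ?thesis using xy \<open>x = 0\<close>
      by (intro exI[of _ 2] exI[of _ "replicate k 2"]) (auto simp: ep_def enc1_def)
  qed
qed

definition dT :: "nat \<Rightarrow> nat \<Rightarrow> nat \<times> nat list" where
  "dT q a = (if q = 0 then (if a = 4 then 1 else 0, [a])
    else if q = 1 then (if a = 1 \<or> a = 3 then (2,[a]) else if a = 4 then (3,[]) else (3,[4,a]))
    else if q = 2 then (if a = 4 then 1 else 2, [a])
    else (3, [a]))"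
definition fT :: "nat \<Rightarrow> nat list" where "fT q = (if q = 1 then [4] else [])"

lemma T_copy02: "q = 0 \<or> q = 2 \<Longrightarrow> 4 \<notin> set w \<Longrightarrow> gsteps dT q (w @ [4]) = (1, w @ [4])"
proof -
  assume q: "q = 0 \<or> q = 2" and w: "4 \<notin> set w"
  have "gsteps dT q w = (q, w)" using q w by (intro gsteps_copy) (auto simp: dT_def)
  moreover have "gsteps dT q [4] = (1, [4])" using q by (auto simp: dT_def)
  ultimately show ?thesis by (rule gsteps_append)
qed

lemma T_copy3: "gsteps dT 3 w = (3, w)"
  by (intro gsteps_copy) (auto simp: dT_def)

lemma T_fun3: "gfun dT fT 3 w = w"
  using T_copy3[of w] by (simp add: gfun_def fT_def)

lemma T_neg: "q < (0,0) \<Longrightarrow> gsteps dT 1 (ep q) = (1, ep q)"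
proof -
  assume "q < (0,0)"
  then obtain c w' where e: "ep q = c # w' @ [4]" "c \<in> {1,3}" "4 \<notin> set w'" using ep_neg by blast
  have "gsteps dT 2 (w' @ [4]) = (1, w' @ [4])" using T_copy02 e by auto
  then show ?thesis using e by (auto simp: dT_def)
qed

lemma T_pos: "q > (0,0) \<Longrightarrow> gsteps dT 1 (ep q) = (3, 4 # ep q)"
proof -
  assume "q > (0,0)"
  then obtain c w' where e: "ep q = c # w' @ [4]" "c \<in> {0,2}" "4 \<notin> set w'" using ep_pos by blast
  have "gsteps dT 3 (w' @ [4]) = (3, w' @ [4])" by (rule T_copy3)
  then show ?thesis using e by (auto simp: dT_def)
qed

lemma T_zero: "gsteps dT 1 (ep (0,0)) = (3, [])"
  by (simp add: ep_zero dT_def)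

lemma T_v: "gsteps dT 0 (ep v) = (1, ep v)"
  unfolding ep_split by (rule T_copy02[OF _ enc1_nw]) simp

definition tog :: "(int \<times> int) set \<Rightarrow> (int \<times> int) set" where
  "tog X = (if (0,0) \<in> X then X - {(0,0)} else insert (0,0) X)"

lemma T_main: "sorted_wrt (<) qs \<Longrightarrow> gfun dT fT 1 (concat (map ep qs)) = concat (map ep (sorted_list_of_set (tog (set qs))))"
proof (induction qs)
  case Nil
  then show ?case by (simp add: gfun_def fT_def tog_def ep_zero)
next
  case (Cons q qs)
  have sq: "sorted_wrt (<) qs" and gq: "\<forall>y\<in>set qs. q < y" using Cons.prems by auto
  have IH: "gfun dT fT 1 (concat (map ep qs)) = concat (map ep (sorted_list_of_set (tog (set qs))))"
    using Cons.IH sq by simp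
  consider "q < (0,0)" | "q = (0,0)" | "q > (0,0)" by (meson linorder_cases)
  then show ?case
  proof cases
    case 1
    have "gfun dT fT 1 (concat (map ep (q # qs))) = ep q @ gfun dT fT 1 (concat (map ep qs))"
      using gfun_append[OF T_neg[OF 1]] by simp
    moreover have "tog (set (q # qs)) = insert q (tog (set qs))" using 1 by (auto simp: tog_def)
    moreover have "sorted_list_of_set (insert q (tog (set qs))) = q # sorted_list_of_set (tog (set qs))"
      using gq 1 by (intro sl_insert_min) (auto simp: tog_def)
    ultimately show ?thesis using IH by simp
  next
    case 2
    have "gfun dT fT 1 (concat (map ep (q # qs))) = concat (map ep qs)"
      using gfun_append[OF T_zero] 2 T_fun3 by simp
    moreover have "tog (set (q # qs)) = set qs" using 2 gq by (auto simp: tog_def)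
    ultimately show ?thesis using sl_eq[OF sq] by simp
  next
    case 3
    have "gfun dT fT 1 (concat (map ep (q # qs))) = 4 # ep q @ concat (map ep qs)"
      using gfun_append[OF T_pos[OF 3]] T_fun3 by simp
    moreover have "tog (set (q # qs)) = insert (0,0) (set (q # qs))" using 3 gq by (auto simp: tog_def)
    moreover have "sorted_list_of_set (insert (0,0) (set (q # qs))) = (0,0) # q # qs"
    proof -
      have g0: "\<forall>y\<in>set (q#qs). (0::int,0::int) < y" using gq 3 by (metis less_trans set_ConsD)
      have "sorted_wrt (<) ((0,0) # q # qs)" unfolding sorted_wrt.simps(2)[of _ "(0,0)"] using g0 Cons.prems by blast
      then show ?thesis using sl_eq by fastforce
    qed
    ultimately show ?thesis by (simp add: ep_zero)
  qed
qed

lemma T_E: "g \<in> carrier lamplighter2 \<Longrightarrow> gfun dT fT 0 (E g) = E (g \<otimes>\<^bsub>lamplighter2\<^esub> tg)"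
proof -
  assume g: "g \<in> carrier lamplighter2"
  obtain f v where gf: "g = (f, v)" by (metis surj_pair)
  have fin: "finite (RR f v)" using g gf RR_fin by (simp add: ll_carrier)
  have gt: "g \<otimes>\<^bsub>lamplighter2\<^esub> tg = (\<lambda>p. f p \<noteq> ((fst p - fst v, snd p - snd v) = (0,0)), v)"
    using gf by (simp add: tg_def)
  have R: "RR (\<lambda>p. f p \<noteq> ((fst p - fst v, snd p - snd v) = (0,0))) v = tog (RR f v)"
    by (auto simp: RR_def tog_def)
  have "gfun dT fT 0 (E g) = ep v @ gfun dT fT 1 (concat (map ep (sorted_list_of_set (RR f v))))"
    using gfun_append[OF T_v] gf by (simp add: E_def)
  also have "\<dots> = ep v @ concat (map ep (sorted_list_of_set (tog (RR f v))))"
    using T_main[of "sorted_list_of_set (RR f v)"] fin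
    by (simp add: sorted_list_of_set.strict_sorted_key_list_of_set)
  finally show ?thesis using gt R by (simp add: E_def)
qed

definition dS :: "bool \<Rightarrow> nat \<Rightarrow> nat \<Rightarrow> nat \<Rightarrow> nat \<Rightarrow> nat \<times> nat list" where
  "dS ysk u n q c = (
    if q = 0 then (if ysk \<and> c < 2 then (0,[c]) else if c = n then (1,[]) else if c = 4 then (2,[u,4]) else (1,[u,c]))
    else if q = 1 then (if c = 4 then 2 else 1, [c])
    else if q = 2 then (if ysk \<and> c < 2 then (2,[c]) else if c = u then (3,[]) else if c = 4 then (2,[n,4]) else (3,[n,c]))
    else (if c = 4 then 2 else 3, [c]))"

definition incr :: "nat \<Rightarrow> nat \<Rightarrow> nat list \<Rightarrow> nat list" where
  "incr a b w = (if w \<noteq> [] \<and> hd w = b then tl w else a # w)"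

lemma S_copy13: "q = 1 \<or> q = 3 \<Longrightarrow> 4 \<notin> set w \<Longrightarrow> gsteps (dS ysk u n) q (w @ [4]) = (2, w @ [4])"
proof -
  assume q: "q = 1 \<or> q = 3" and w: "4 \<notin> set w"
  have "gsteps (dS ysk u n) q w = (q, w)" using q w by (intro gsteps_copy) (auto simp: dS_def)
  moreover have "gsteps (dS ysk u n) q [4] = (2, [4])" using q by (auto simp: dS_def)
  ultimately show ?thesis by (rule gsteps_append)
qed

lemma S0: "\<forall>c\<in>set s1. ysk \<and> c < 2 \<Longrightarrow> 4 \<notin> set w1 \<Longrightarrow> (w1 = [] \<or> \<not>(ysk \<and> hd w1 < 2)) \<Longrightarrow> u \<noteq> 4 \<Longrightarrow> n \<noteq> 4 \<Longrightarrow>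
  gsteps (dS ysk u n) 0 (s1 @ w1 @ [4]) = (2, s1 @ incr u n w1 @ [4])"
proof -
  assume s1: "\<forall>c\<in>set s1. ysk \<and> c < 2" and w1: "4 \<notin> set w1" and h: "w1 = [] \<or> \<not>(ysk \<and> hd w1 < 2)"
    and un: "u \<noteq> 4" "n \<noteq> 4"
  have a: "gsteps (dS ysk u n) 0 s1 = (0, s1)" using s1 by (intro gsteps_copy) (auto simp: dS_def)
  have "gsteps (dS ysk u n) 0 (w1 @ [4]) = (2, incr u n w1 @ [4])"
  proof (cases w1)
    case Nil then show ?thesis using un by (simp add: dS_def incr_def)
  next
    case (Cons c w')
    have c: "\<not>(ysk \<and> c < 2)" "c \<noteq> 4" "4 \<notin> set w'" using h w1 Cons by auto
    have r: "gsteps (dS ysk u n) 1 (w' @ [4]) = (2, w' @ [4])" using S_copy13 c by auto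
    show ?thesis using Cons c r by (auto simp: dS_def incr_def)
  qed
  then show ?thesis using gsteps_append[OF a] by simp
qed

lemma S2: "\<forall>c\<in>set s1. ysk \<and> c < 2 \<Longrightarrow> 4 \<notin> set w1 \<Longrightarrow> (w1 = [] \<or> \<not>(ysk \<and> hd w1 < 2)) \<Longrightarrow> u \<noteq> 4 \<Longrightarrow> n \<noteq> 4 \<Longrightarrow>
  gsteps (dS ysk u n) 2 (s1 @ w1 @ [4]) = (2, s1 @ incr n u w1 @ [4])"
proof -
  assume s1: "\<forall>c\<in>set s1. ysk \<and> c < 2" and w1: "4 \<notin> set w1" and h: "w1 = [] \<or> \<not>(ysk \<and> hd w1 < 2)"
    and un: "u \<noteq> 4" "n \<noteq> 4"
  have a: "gsteps (dS ysk u n) 2 s1 = (2, s1)" using s1 by (intro gsteps_copy) (auto simp: dS_def)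
  have "gsteps (dS ysk u n) 2 (w1 @ [4]) = (2, incr n u w1 @ [4])"
  proof (cases w1)
    case Nil then show ?thesis using un by (simp add: dS_def incr_def)
  next
    case (Cons c w')
    have c: "\<not>(ysk \<and> c < 2)" "c \<noteq> 4" "4 \<notin> set w'" using h w1 Cons by auto
    have r: "gsteps (dS ysk u n) 3 (w' @ [4]) = (2, w' @ [4])" using S_copy13 c by auto
    show ?thesis using Cons c r by (auto simp: dS_def incr_def)
  qed
  then show ?thesis using gsteps_append[OF a] by simp
qed

lemma bump: "a \<noteq> b \<Longrightarrow> (r = [] \<or> hd r \<notin> {a,b}) \<Longrightarrow> incr a b (enc1 a b z @ r) = enc1 a b (z+1) @ r"
proof -
  assume ab: "a \<noteq> b" and r: "r = [] \<or> hd r \<notin> {a,b}"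
  consider "z > 0" | "z = 0" | "z < 0" by linarith
  then show ?thesis
  proof cases
    case 1
    then obtain k where k: "enc1 a b z = a # replicate k a" using enc1_pos by blast
    have "nat z = Suc k" using arg_cong[where f=length, OF k] 1 by (simp add: enc1_def)
    then have "enc1 a b (z+1) = a # a # replicate k a" using 1 by (simp add: enc1_def nat_add_distrib)
    then show ?thesis using k ab by (simp add: incr_def)
  next
    case 2
    then show ?thesis using r by (cases r) (auto simp: incr_def enc1_def)
  next
    case 3
    then obtain k where k: "enc1 a b z = b # replicate k b" "enc1 a b (z+1) = replicate k b" using enc1_neg by blast
    then show ?thesis by (simp add: incr_def)
  qed
qed

lemma enc1_swap: "enc1 a b z = enc1 b a (-z)"
  by (auto simp: enc1_def)

lemma bump_dn: "a \<noteq> b \<Longrightarrow> (r = [] \<or> hd r \<notin> {a,b}) \<Longrightarrow> incr b a (enc1 a b z @ r) = enc1 a b (z-1) @ r"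
proof -
  assume ab: "a \<noteq> b" and r: "r = [] \<or> hd r \<notin> {a,b}"
  have "incr b a (enc1 b a (-z) @ r) = enc1 b a (-z+1) @ r" using ab r by (intro bump) auto
  then show ?thesis using enc1_swap[of a b z] enc1_swap[of b a "-z+1"] by simp
qed

lemma hd_ency: "enc1 2 3 y @ [4] = [] \<or> hd (enc1 2 3 y @ [4]) \<notin> {0::nat, 1}"
  using enc1_set[of 2 3 y] by (cases "enc1 2 3 y") auto

lemma px: assumes "(u = 0 \<and> n = 1 \<and> d = 1) \<or> (u = 1 \<and> n = 0 \<and> d = -1)"
  shows "gsteps (dS False u n) 0 (ep q) = (2, ep (fst q + d, snd q))"
    and "gsteps (dS False u n) 2 (ep q) = (2, ep (fst q - d, snd q))"
proof -
  have e: "ep q = [] @ (enc1 0 1 (fst q) @ enc1 2 3 (snd q)) @ [4]" by (simp add: ep_def)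
  have un: "u \<noteq> 4" "n \<noteq> 4" using assms by auto
  have hr: "enc1 2 3 (snd q) = [] \<or> hd (enc1 2 3 (snd q)) \<notin> {0::nat,1}"
    using enc1_set[of 2 3 "snd q"] by (cases "enc1 2 3 (snd q)") auto
  have up: "incr 0 1 (enc1 0 1 x @ enc1 2 3 (snd q)) = enc1 0 1 (x+1) @ enc1 2 3 (snd q)" for x
    using hr by (intro bump) auto
  have dn: "incr 1 0 (enc1 0 1 x @ enc1 2 3 (snd q)) = enc1 0 1 (x-1) @ enc1 2 3 (snd q)" for x
    using hr bump_dn[of 0 1 "enc1 2 3 (snd q)" x] by auto
  have "gsteps (dS False u n) 0 (ep q) = (2, incr u n (enc1 0 1 (fst q) @ enc1 2 3 (snd q)) @ [4])"
    using S0[of "[]" False "enc1 0 1 (fst q) @ enc1 2 3 (snd q)" u n] enc1_nw un e by simp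
  then show "gsteps (dS False u n) 0 (ep q) = (2, ep (fst q + d, snd q))"
    using assms up dn by (auto simp: ep_def)
  have "gsteps (dS False u n) 2 (ep q) = (2, incr n u (enc1 0 1 (fst q) @ enc1 2 3 (snd q)) @ [4])"
    using S2[of "[]" False "enc1 0 1 (fst q) @ enc1 2 3 (snd q)" u n] enc1_nw un e by simp
  then show "gsteps (dS False u n) 2 (ep q) = (2, ep (fst q - d, snd q))"
    using assms up dn by (auto simp: ep_def)
qed

lemma py: assumes "(u = 2 \<and> n = 3 \<and> d = 1) \<or> (u = 3 \<and> n = 2 \<and> d = -1)"
  shows "gsteps (dS True u n) 0 (ep q) = (2, ep (fst q, snd q + d))"
    and "gsteps (dS True u n) 2 (ep q) = (2, ep (fst q, snd q - d))"
proof -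
  have e: "ep q = enc1 0 1 (fst q) @ enc1 2 3 (snd q) @ [4]" by (simp add: ep_def)
  have un: "u \<noteq> 4" "n \<noteq> 4" using assms by auto
  have s1: "\<forall>c\<in>set (enc1 0 1 (fst q)). True \<and> c < 2" using enc1_set[of 0 1 "fst q"] by auto
  have w1: "4 \<notin> set (enc1 2 3 (snd q))" using enc1_set[of 2 3 "snd q"] by auto
  have h: "enc1 2 3 (snd q) = [] \<or> \<not>(True \<and> hd (enc1 2 3 (snd q)) < 2)"
    using enc1_set[of 2 3 "snd q"] by (cases "enc1 2 3 (snd q)") auto
  have up: "incr 2 3 (enc1 2 3 y) = enc1 2 3 (y+1)" for y
    using bump[of 2 3 "[]" y] by simp
  have dn: "incr 3 2 (enc1 2 3 y) = enc1 2 3 (y-1)" for y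
    using bump_dn[of 2 3 "[]" y] by simp
  have "gsteps (dS True u n) 0 (ep q) = (2, enc1 0 1 (fst q) @ incr u n (enc1 2 3 (snd q)) @ [4])"
    using S0[OF s1 w1 h un] e by simp
  then show "gsteps (dS True u n) 0 (ep q) = (2, ep (fst q, snd q + d))"
    using assms up dn by (auto simp: ep_def)
  have "gsteps (dS True u n) 2 (ep q) = (2, enc1 0 1 (fst q) @ incr n u (enc1 2 3 (snd q)) @ [4])"
    using S2[OF s1 w1 h un] e by simp
  then show "gsteps (dS True u n) 2 (ep q) = (2, ep (fst q, snd q - d))"
    using assms up dn by (auto simp: ep_def)
qed

lemma S_list: "(\<And>q. gsteps d 2 (ep q) = (2, ep (tr q))) \<Longrightarrow> gsteps d 2 (concat (map ep qs)) = (2, concat (map ep (map tr qs)))"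
proof (induction qs)
  case Nil then show ?case by simp
next
  case (Cons q qs)
  show ?case using gsteps_append[OF Cons.prems Cons.IH[OF Cons.prems]] by simp
qed

lemma tr_image:
  fixes dx dy :: int and A :: "(int \<times> int) set"
  shows "(\<lambda>q. (fst q - dx, snd q - dy)) ` A = {x. (fst x + dx, snd x + dy) \<in> A}"
  apply (rule Set.set_eqI, rule iffI)
   apply auto[1]
  subgoal for x by (rule image_eqI[of _ _ "(fst x + dx, snd x + dy)"]) auto
  done

lemma S_E:
  assumes h0: "\<And>q. gsteps d 0 (ep q) = (2, ep (fst q + dx, snd q + dy))"
    and h2: "\<And>q. gsteps d 2 (ep q) = (2, ep (fst q - dx, snd q - dy))"
    and g: "g \<in> carrier lamplighter2"
  shows "gfun d (\<lambda>_. []) 0 (E g) = E (g \<otimes>\<^bsub>lamplighter2\<^esub> mv dx dy)"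
proof -
  obtain f v where gf: "g = (f, v)" by (metis surj_pair)
  let ?tr = "\<lambda>q::int\<times>int. (fst q - dx, snd q - dy)"
  have fin: "finite (RR f v)" using g gf RR_fin by (simp add: ll_carrier)
  have gm: "g \<otimes>\<^bsub>lamplighter2\<^esub> mv dx dy = (f, (fst v + dx, snd v + dy))"
    using gf by (simp add: mv_def)
  have R: "RR f (fst v + dx, snd v + dy) = ?tr ` RR f v"
    unfolding tr_image by (auto simp: RR_def algebra_simps)
  have mono: "sorted_wrt (<) (map ?tr xs)" if "sorted_wrt (<) xs" for xs :: "(int \<times> int) list"
  proof -
    have "sorted_wrt (\<lambda>x y. ?tr x < ?tr y) xs"
      using that by (rule sorted_wrt_mono_rel[rotated]) (auto simp: less_prod_def)
    then show ?thesis by (simp add: sorted_wrt_map)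
  qed
  have sl: "sorted_list_of_set (?tr ` RR f v) = map ?tr (sorted_list_of_set (RR f v))"
    using sl_eq[OF mono[OF strict_sorted_list_of_set[of "RR f v"]]] fin by simp
  have "gfun d (\<lambda>_. []) 0 (E g) = ep (fst v + dx, snd v + dy) @ gfun d (\<lambda>_. []) 2 (concat (map ep (sorted_list_of_set (RR f v))))"
    using gfun_append[OF h0] gf by (simp add: E_def)
  also have "\<dots> = ep (fst v + dx, snd v + dy) @ concat (map ep (map ?tr (sorted_list_of_set (RR f v))))"
    using S_list[of d ?tr, OF h2] by (simp add: gfun_def)
  finally show ?thesis using gm R sl by (simp add: E_def)
qed

definition Sig :: "nat set" where "Sig = {0,1,2,3,4}"

lemma gen_ok:
  assumes F: "lintime_computable 2 Sig F" and s: "s \<in> carrier lamplighter2"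
    and h: "\<And>g. g \<in> carrier lamplighter2 \<Longrightarrow> F (E g) = E (g \<otimes>\<^bsub>lamplighter2\<^esub> s)"
  shows "\<exists>f. lintime_computable 2 Sig f \<and> (\<forall>w\<in>E ` carrier lamplighter2. f w \<in> E ` carrier lamplighter2 \<and>
      inv_into (carrier lamplighter2) E (f w) = inv_into (carrier lamplighter2) E w \<otimes>\<^bsub>lamplighter2\<^esub> s)"
proof (intro exI[of _ F] conjI ballI)
  show "lintime_computable 2 Sig F" by (rule F)
  fix w assume "w \<in> E ` carrier lamplighter2"
  then obtain g where g: "g \<in> carrier lamplighter2" "w = E g" by blast
  have gs: "g \<otimes>\<^bsub>lamplighter2\<^esub> s \<in> carrier lamplighter2"
    by (rule monoid.m_closed[OF group.is_monoid[OF ll_group] g(1) s])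
  show "F w \<in> E ` carrier lamplighter2" using g gs h by auto
  show "inv_into (carrier lamplighter2) E (F w) = inv_into (carrier lamplighter2) E w \<otimes>\<^bsub>lamplighter2\<^esub> s"
    using g gs h inv_into_f_f[OF E_inj] by simp
qed

lemma T_lin: "lintime_computable 2 Sig (gfun dT fT 0)"
  by (rule gsm_lintime) (auto simp: Sig_def dT_def fT_def)

lemma S_lin: "u \<in> Sig \<Longrightarrow> n \<in> Sig \<Longrightarrow> lintime_computable 2 Sig (gfun (dS ysk u n) (\<lambda>_. []) 0)"
  by (rule gsm_lintime) (auto simp: Sig_def dS_def)

lemma E_lists: "E g \<in> lists Sig"
proof -
  have H: "set (ep q) \<subseteq> Sig" for q using enc1_set[of 0 1 "fst q"] enc1_set[of 2 3 "snd q"] by (auto simp: ep_def Sig_def)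
  have H2: "set (concat (map ep xs)) \<subseteq> Sig" for xs using H by (induction xs) auto
  have "set (E g) \<subseteq> Sig" unfolding E_def using H H2 by (simp only: set_append Un_subset_iff)
  then show ?thesis by (auto simp: in_lists_conv_set)
qed

theorem theorem2p2:
  shows "cayley_lintime 2 lamplighter2"
  unfolding cayley_lintime_def
proof (intro conjI exI[of _ Gens])
  show "group lamplighter2" by (rule ll_group)
  show "finite Gens" by (simp add: Gens_def)
  show "semigroup_generates lamplighter2 Gens" by (rule ll_generates)
  show "cayley_lintime_wrt 2 lamplighter2 Gens"
    unfolding cayley_lintime_wrt_def
  proof (intro exI[of _ Sig] exI[of _ "E ` carrier lamplighter2"] exI[of _ "inv_into (carrier lamplighter2) E"] conjI ballI)
    show "finite Sig" by (simp add: Sig_def)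
    show "E ` carrier lamplighter2 \<subseteq> lists Sig" using E_lists by auto
    show "bij_betw (inv_into (carrier lamplighter2) E) (E ` carrier lamplighter2) (carrier lamplighter2)"
      by (rule bij_betw_inv_into[OF inj_on_imp_bij_betw[OF E_inj]])
    fix s assume s: "s \<in> Gens"
    then have sc: "s \<in> carrier lamplighter2" using Gens_carrier by auto
    have x10: "\<And>q. gsteps (dS False 0 1) 0 (ep q) = (2, ep (fst q + (1), snd q + (0)))"
      using px(1)[of 0 1 "1"] by simp
    have x12: "\<And>q. gsteps (dS False 0 1) 2 (ep q) = (2, ep (fst q - (1), snd q - (0)))"
      using px(2)[of 0 1 "1"] by simp
    have x1: "\<And>g. g \<in> carrier lamplighter2 \<Longrightarrow> gfun (dS False 0 1) (\<lambda>_. []) 0 (E g) = E (g \<otimes>\<^bsub>lamplighter2\<^esub> mv 1 0)"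
      using S_E[OF x10 x12] by simp
    have x20: "\<And>q. gsteps (dS False 1 0) 0 (ep q) = (2, ep (fst q + (-1), snd q + (0)))"
      using px(1)[of 1 0 "-1"] by simp
    have x22: "\<And>q. gsteps (dS False 1 0) 2 (ep q) = (2, ep (fst q - (-1), snd q - (0)))"
      using px(2)[of 1 0 "-1"] by simp
    have x2: "\<And>g. g \<in> carrier lamplighter2 \<Longrightarrow> gfun (dS False 1 0) (\<lambda>_. []) 0 (E g) = E (g \<otimes>\<^bsub>lamplighter2\<^esub> mv (-1) 0)"
      using S_E[OF x20 x22] by simp
    have y10: "\<And>q. gsteps (dS True 2 3) 0 (ep q) = (2, ep (fst q + (0), snd q + (1)))"
      using py(1)[of 2 3 "1"] by simp
    have y12: "\<And>q. gsteps (dS True 2 3) 2 (ep q) = (2, ep (fst q - (0), snd q - (1)))"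
      using py(2)[of 2 3 "1"] by simp
    have y1: "\<And>g. g \<in> carrier lamplighter2 \<Longrightarrow> gfun (dS True 2 3) (\<lambda>_. []) 0 (E g) = E (g \<otimes>\<^bsub>lamplighter2\<^esub> mv 0 1)"
      using S_E[OF y10 y12] by simp
    have y20: "\<And>q. gsteps (dS True 3 2) 0 (ep q) = (2, ep (fst q + (0), snd q + (-1)))"
      using py(1)[of 3 2 "-1"] by simp
    have y22: "\<And>q. gsteps (dS True 3 2) 2 (ep q) = (2, ep (fst q - (0), snd q - (-1)))"
      using py(2)[of 3 2 "-1"] by simp
    have y2: "\<And>g. g \<in> carrier lamplighter2 \<Longrightarrow> gfun (dS True 3 2) (\<lambda>_. []) 0 (E g) = E (g \<otimes>\<^bsub>lamplighter2\<^esub> mv 0 (-1))"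
      using S_E[OF y20 y22] by simp
    from s show "\<exists>f. lintime_computable 2 Sig f \<and> (\<forall>w\<in>E ` carrier lamplighter2. f w \<in> E ` carrier lamplighter2 \<and>
      inv_into (carrier lamplighter2) E (f w) = inv_into (carrier lamplighter2) E w \<otimes>\<^bsub>lamplighter2\<^esub> s)"
      unfolding Gens_def
    proof (elim insertE emptyE)
      assume e: "s = tg" show ?thesis by (rule gen_ok[OF T_lin sc]) (simp add: e T_E)
    next
      have L: "lintime_computable 2 Sig (gfun (dS False 0 1) (\<lambda>_. []) 0)" by (rule S_lin) (simp_all add: Sig_def)
      assume e: "s = mv 1 0" show ?thesis by (rule gen_ok[OF L sc]) (unfold e, rule x1)
    next
      have L: "lintime_computable 2 Sig (gfun (dS False 1 0) (\<lambda>_. []) 0)" by (rule S_lin) (simp_all add: Sig_def)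
      assume e: "s = mv (-1) 0" show ?thesis by (rule gen_ok[OF L sc]) (unfold e, rule x2)
    next
      have L: "lintime_computable 2 Sig (gfun (dS True 2 3) (\<lambda>_. []) 0)" by (rule S_lin) (simp_all add: Sig_def)
      assume e: "s = mv 0 1" show ?thesis by (rule gen_ok[OF L sc]) (unfold e, rule y1)
    next
      have L: "lintime_computable 2 Sig (gfun (dS True 3 2) (\<lambda>_. []) 0)" by (rule S_lin) (simp_all add: Sig_def)
      assume e: "s = mv 0 (-1)" show ?thesis by (rule gen_ok[OF L sc]) (unfold e, rule y2)
    qed
  qed
qed

end
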